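(* Consider the remote-estimation MDP described in the context, assume $\rho^2(\mathbf{A})(1-\theta_{\max})<1$, and let $V$ be the relative value function obtained as the limit of relative value iteration (defined in the context) started from a function $V^0$ that is non-decreasing in $\delta$ and in $\tau$ (e.g. $V^0\equiv0$). Then: (i) for every $\tau\in\mathbb{N}^+$, $\delta\mapsto V(\tau,\delta)$ is non-decreasing; (ii) for every $\delta\in\mathbb{N}^+$, $\tau\mapsto V(\tau,\delta)$ is non-decreasing.
   Context: Linear Gaussian process $\mathbf{x}_{k+1}=\mathbf{A}\mathbf{x}_k+\mathbf{w}_k$, $\mathbf{w}_k$ i.i.d. $\mathcal{N}(0,\mathbf{Q})$, $\mathbf{Q}\succeq 0$; measurements $\mathbf{y}_k=\mathbf{C}\mathbf{x}_k+\mathbf{v}_k$, $\mathbf{v}_k$ i.i.d. $\mathcal{N}(0,\mathbf{R})$, $\mathbf{R}\succ0$; $(\mathbf{A},\mathbf{C})$ observable, $(\mathbf{A},\sqrt{\mathbf{Q}})$ controllable; $\bar{\mathbf{P}}$ the steady-state a posteriori Kalman error covariance; $\rho(\cdot)$ spectral radius. $f(\delta)=\mathrm{tr}\big(\mathbf{A}^{\delta}\bar{\mathbf{P}}(\mathbf{A}^T)^{\delta}+\sum_{r=0}^{\delta-1}\mathbf{A}^r\mathbf{Q}(\mathbf{A}^T)^r\big)$, which is non-decreasing in $\delta$. $\theta:\mathbb{N}^+\to[\theta_{\min},\theta_{\max}]\subseteq[0,1]$ non-increasing; $\bar\theta=1-\theta$; integers $\tau_D>1$, $\delta_R>1$. MDP: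 states $s=(\tau,\delta)\in\mathcal{S}=\mathbb{N}^+\times\mathbb{N}^+$, actions $\mathcal{U}=\{0,1,2\}$. Transitions $P_{s,s'}(u)$ from $(\tau,\delta)$: $u=0$: to $(\tau+1,\delta+1)$ w.p. 1; $u=1$: to $(\tau+\tau_D,1)$ w.p. $\theta(\tau)$, to $(\tau+\tau_D,\delta+1)$ w.p. $\bar\theta(\tau)$; $u=2$: to $(1,\delta+\delta_R)$ w.p. 1. Cost $c(s,u)=f(\delta)$ for $u\in\{0,1\}$, $c(s,2)=\sum_{r=0}^{\delta_R-1}f(\delta+r)$. Relative value iteration: fix a reference state $s_{\mathrm{ref}}$; for $n\ge1$, $Q^n(s,u)=c(s,u)+\sum_{s'}P_{s,s'}(u)V^{n-1}(s')$, $\tilde V^n(s)=\min_{u\in\mathcal{U}}Q^n(s,u)$, $V^n(s)=\tilde V^n(s)-\tilde V^n(s_{\mathrm{ref}})$; $V=\lim_n V^n$, which solves the average-cost Bellman equation $\lambda^*+V(s)=\min_u[c(s,u)+\sum_{s'}P_{s,s'}(u)V(s')]$. *)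

theory Defs
  imports "HOL-Analysis.Analysis"
begin

text \<open>Matrix power with respect to matrix multiplication (the type class power on vec is componentwise).\<close>
primrec mpow :: "real^'n^'n \<Rightarrow> nat \<Rightarrow> real^'n^'n" where
  "mpow M 0 = mat 1"
| "mpow M (Suc k) = M ** mpow M k"

definition psd :: "real^'n^'n \<Rightarrow> bool" where
  "psd M \<longleftrightarrow> transpose M = M \<and> (\<forall>x. 0 \<le> x \<bullet> (M *v x))"

definition pd :: "real^'n^'n \<Rightarrow> bool" where
  "pd M \<longleftrightarrow> transpose M = M \<and> (\<forall>x. x \<noteq> 0 \<longrightarrow> 0 < x \<bullet> (M *v x))"

definition complexify :: "real^'n^'n \<Rightarrow> complex^'n^'n" where
  "complexify M = (\<chi> i j. complex_of_real (M $ i $ j))"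

definition spectral_radius :: "real^'n^'n \<Rightarrow> real" where
  "spectral_radius M = Max (cmod ` {l. det (mat l - complexify M) = 0})"

text \<open>Observability of (A,C): the observability matrix [C; CA; ...; CA^(n-1)] has full column
  rank n, i.e. trivial kernel.\<close>
definition observable :: "real^'n^'n \<Rightarrow> real^'n^'m \<Rightarrow> bool" where
  "observable A C \<longleftrightarrow>
     (\<forall>x. (\<forall>k<CARD('n). C *v (mpow A k *v x) = 0) \<longrightarrow> x = 0)"

text \<open>Controllability of (A,B): the controllability matrix [B, AB, ..., A^(n-1)B] has full row
  rank n, i.e. its transpose has trivial kernel.\<close>
definition controllable :: "real^'n^'n \<Rightarrow> real^'k^'n \<Rightarrow> bool" where
  "controllable A B \<longleftrightarrow>
     (\<forall>y. (\<forall>k<CARD('n). y v* (mpow A k ** B) = 0) \<longrightarrow> y = 0)"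

text \<open>P is a steady-state a posteriori Kalman error covariance: a fixed point of the
  Kalman filter covariance recursion (prediction followed by measurement update).\<close>
definition kalman_prior :: "real^'n^'n \<Rightarrow> real^'n^'n \<Rightarrow> real^'n^'n \<Rightarrow> real^'n^'n" where
  "kalman_prior A Q P = A ** P ** transpose A + Q"

definition kalman_update ::
  "real^'n^'n \<Rightarrow> real^'n^'m \<Rightarrow> real^'n^'n \<Rightarrow> real^'m^'m \<Rightarrow> real^'n^'n \<Rightarrow> real^'n^'n" where
  "kalman_update A C Q R P =
     (let Pm = kalman_prior A Q P
      in Pm - Pm ** transpose C ** matrix_inv (C ** Pm ** transpose C + R) ** C ** Pm)"

definition steady_state_posterior ::
  "real^'n^'n \<Rightarrow> real^'n^'m \<Rightarrow> real^'n^'n \<Rightarrow> real^'m^'m \<Rightarrow> real^'n^'n \<Rightarrow> bool" where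
  "steady_state_posterior A C Q R P \<longleftrightarrow> psd P \<and> kalman_update A C Q R P = P"

definition ferr :: "real^'n^'n \<Rightarrow> real^'n^'n \<Rightarrow> real^'n^'n \<Rightarrow> nat \<Rightarrow> real" where
  "ferr A Pbar Q d = trace (mpow A d ** Pbar ** mpow (transpose A) d
      + (\<Sum>r<d. mpow A r ** Q ** mpow (transpose A) r))"

text \<open>States are pairs (tau, delta) of positive naturals; actions 0,1,2.\<close>
definition cost :: "(nat \<Rightarrow> real) \<Rightarrow> nat \<Rightarrow> nat \<times> nat \<Rightarrow> nat \<Rightarrow> real" where
  "cost f dR s u = (if u = 2 then (\<Sum>r<dR. f (snd s + r)) else f (snd s))"

definition trans :: "(nat \<Rightarrow> real) \<Rightarrow> nat \<Rightarrow> nat \<Rightarrow> nat \<times> nat \<Rightarrow> nat \<Rightarrow> nat \<times> nat \<Rightarrow> real" where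
  "trans \<theta> tD dR s u s' = (case s of (\<tau>, \<delta>) \<Rightarrow>
     if u = 0 then (if s' = (\<tau> + 1, \<delta> + 1) then 1 else 0)
     else if u = 1 then (if s' = (\<tau> + tD, 1) then \<theta> \<tau> else 0)
                      + (if s' = (\<tau> + tD, \<delta> + 1) then 1 - \<theta> \<tau> else 0)
     else if u = 2 then (if s' = (1, \<delta> + dR) then 1 else 0)
     else 0)"

definition succs :: "nat \<Rightarrow> nat \<Rightarrow> nat \<times> nat \<Rightarrow> nat \<Rightarrow> (nat \<times> nat) set" where
  "succs tD dR s u = (case s of (\<tau>, \<delta>) \<Rightarrow>
     if u = 0 then {(\<tau> + 1, \<delta> + 1)}
     else if u = 1 then {(\<tau> + tD, 1), (\<tau> + tD, \<delta> + 1)}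
     else {(1, \<delta> + dR)})"

definition Qfun ::
  "(nat \<Rightarrow> real) \<Rightarrow> (nat \<Rightarrow> real) \<Rightarrow> nat \<Rightarrow> nat \<Rightarrow> (nat \<times> nat \<Rightarrow> real) \<Rightarrow> nat \<times> nat \<Rightarrow> nat \<Rightarrow> real" where
  "Qfun f \<theta> tD dR V s u = cost f dR s u + (\<Sum>s'\<in>succs tD dR s u. trans \<theta> tD dR s u s' * V s')"

primrec rvi ::
  "(nat \<Rightarrow> real) \<Rightarrow> (nat \<Rightarrow> real) \<Rightarrow> nat \<Rightarrow> nat \<Rightarrow> nat \<times> nat \<Rightarrow> (nat \<times> nat \<Rightarrow> real)
   \<Rightarrow> nat \<Rightarrow> nat \<times> nat \<Rightarrow> real" where
  "rvi f \<theta> tD dR sref V0 0 = V0"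
| "rvi f \<theta> tD dR sref V0 (Suc n) =
     (let Vt = (\<lambda>s. Min ((Qfun f \<theta> tD dR (rvi f \<theta> tD dR sref V0 n) s) ` {0, 1, 2}))
      in (\<lambda>s. Vt s - Vt sref))"

end

theory Submission
  imports Defs
begin


lemma quad_tr: "(x::real^'m) \<bullet> ((M::real^'n^'m) *v y) = (transpose M *v x) \<bullet> y"
  by (simp add: dot_lmul_matrix)

lemma quad_congr:
  assumes "\<forall>y. 0 \<le> y \<bullet> ((N::real^'k^'k) *v y)"
  shows "0 \<le> (x::real^'n) \<bullet> (((M::real^'k^'n) ** N ** transpose M) *v x)"
proof -
  have "x \<bullet> ((M ** N ** transpose M) *v x) = (transpose M *v x) \<bullet> (N *v (transpose M *v x))"
    by (simp add: quad_tr matrix_vector_mul_assoc[symmetric])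
  thus ?thesis using assms by simp
qed

lemma trace_nonneg:
  assumes "\<forall>y. 0 \<le> y \<bullet> ((X::real^'n^'n) *v y)"
  shows "0 \<le> trace X"
proof -
  have "X $ i $ i = axis i 1 \<bullet> (X *v axis i 1)" for i
  proof -
    have ax: "axis i 1 \<bullet> v = v $ i" for v :: "real^'n" by (simp add: cart_eq_inner_axis inner_commute)
    show ?thesis by (simp add: ax matrix_vector_mult_basis column_def)
  qed
  hence "trace X = (\<Sum>i\<in>UNIV. axis i 1 \<bullet> (X *v axis i 1))" by (simp add: trace_def)
  also have "\<dots> \<ge> 0" using assms by (intro sum_nonneg) auto
  finally show ?thesis .
qed

lemma mpow_Suc': "mpow M (Suc k) = mpow M k ** M"
  by (induction k) (simp_all add: matrix_mul_assoc)

lemma mpow_transpose: "mpow (transpose M) k = transpose (mpow M k)"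
proof (induction k)
  case (Suc k)
  have "mpow (transpose M) (Suc k) = mpow (transpose M) k ** transpose M" by (rule mpow_Suc')
  also have "\<dots> = transpose (M ** mpow M k)" using Suc by (simp add: matrix_transpose_mul)
  finally show ?case by simp
qed (simp add: transpose_mat)


lemma matrix_add_rdistrib': "((B + C) ** A) = (B ** A) + (C ** (A::real^'a^'b))"
  by (vector matrix_matrix_mult_def sum.distrib[symmetric] field_simps)

lemma transpose_add': "transpose ((X::real^'a^'b) + Y) = transpose X + transpose Y"
  by (vector transpose_def)

lemma inv_props:
  fixes S :: "real^'m^'m"
  assumes "invertible S"
  shows "S ** matrix_inv S = mat 1 \<and> matrix_inv S ** S = mat 1"
  using assms unfolding invertible_def matrix_inv_def by (rule someI_ex)

lemma kalman_gap:
  fixes A P Q :: "real^'n^'n" and C :: "real^'n^'m" and R :: "real^'m^'m"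
  assumes P: "psd P" and Q: "psd Q" and R: "pd R" and fx: "kalman_update A C Q R P = P"
  shows "(y::real^'n) \<bullet> (P *v y) \<le> y \<bullet> (kalman_prior A Q P *v y)"
proof -
  define Pm where "Pm = kalman_prior A Q P"
  define S where "S = C ** Pm ** transpose C + R"
  define Si where "Si = matrix_inv S"
  define K where "K = Pm ** transpose C ** Si ** C ** Pm"
  have PK: "P = Pm - K" using fx unfolding kalman_update_def Let_def Pm_def S_def Si_def K_def by simp
  have Pt: "transpose P = P" and Qt: "transpose Q = Q" using P Q by (auto simp: psd_def)
  have Pmt: "transpose Pm = Pm" unfolding Pm_def kalman_prior_def
    by (simp add: transpose_add' matrix_transpose_mul Pt Qt matrix_mul_assoc)
  have Pmpsd: "0 \<le> x \<bullet> (Pm *v x)" for x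
  proof -
    have "0 \<le> x \<bullet> ((A ** P ** transpose A) *v x)" using P by (intro quad_congr) (auto simp: psd_def)
    moreover have "0 \<le> x \<bullet> (Q *v x)" using Q by (auto simp: psd_def)
    ultimately show ?thesis unfolding Pm_def kalman_prior_def
      by (simp add: matrix_vector_mult_add_rdistrib inner_add_right)
  qed
  have Spos: "w \<bullet> (R *v w) \<le> w \<bullet> (S *v w)" for w
  proof -
    have "0 \<le> w \<bullet> ((C ** Pm ** transpose C) *v w)" using Pmpsd by (intro quad_congr) auto
    thus ?thesis unfolding S_def by (simp add: matrix_vector_mult_add_rdistrib inner_add_right)
  qed
  have "\<forall>w. S *v w = 0 \<longrightarrow> w = 0"
  proof (intro allI impI)
    fix w assume "S *v w = 0"
    hence "w \<bullet> (R *v w) \<le> 0" using Spos[of w] by simp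
    thus "w = 0" using R unfolding pd_def by (meson not_le)
  qed
  hence "invertible S" using matrix_left_invertible_ker invertible_left_inverse by blast
  hence SSi: "S ** Si = mat 1" using inv_props Si_def by blast
  have St: "transpose S = S" unfolding S_def
    by (metis R pd_def Pmt matrix_transpose_mul transpose_add' transpose_transpose matrix_mul_assoc)
  have Sipsd: "\<forall>z. 0 \<le> z \<bullet> (Si *v z)"
  proof
    fix z
    define w where "w = Si *v z"
    have "S *v w = z" unfolding w_def by (simp add: matrix_vector_mul_assoc SSi)
    hence "z \<bullet> (Si *v z) = w \<bullet> (S *v w)" unfolding w_def[symmetric] by (simp add: inner_commute)
    moreover have "0 \<le> w \<bullet> (R *v w)" using R unfolding pd_def by (cases "w = 0") (auto intro: less_imp_le)
    ultimately show "0 \<le> z \<bullet> (Si *v z)" using Spos[of w] by linarith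
  qed
  have "K = (Pm ** transpose C) ** Si ** transpose (Pm ** transpose C)"
    unfolding K_def by (simp add: matrix_transpose_mul Pmt matrix_mul_assoc)
  hence "0 \<le> y \<bullet> (K *v y)" using Sipsd quad_congr by metis
  moreover have "P *v y = Pm *v y - K *v y" using PK by (simp add: matrix_vector_mult_diff_rdistrib)
  ultimately show ?thesis unfolding Pm_def by (simp add: inner_diff_right)
qed

lemma ferr_mono_Suc:
  fixes A P Q :: "real^'n^'n" and C :: "real^'n^'m" and R :: "real^'m^'m"
  assumes P: "psd P" and Q: "psd Q" and R: "pd R" and fx: "kalman_update A C Q R P = P"
  shows "ferr A P Q d \<le> ferr A P Q (Suc d)"
proof -
  define M where "M = mpow A d"
  define X where "X = (\<Sum>r<d. mpow A r ** Q ** mpow (transpose A) r)"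
  have e1: "ferr A P Q d = trace (M ** P ** transpose M) + trace X"
    unfolding ferr_def M_def X_def by (simp add: trace_add mpow_transpose)
  have "ferr A P Q (Suc d) = trace (M ** A ** P ** transpose (M ** A) + (X + M ** Q ** transpose M))"
    unfolding ferr_def M_def X_def mpow_transpose unfolding mpow_Suc' by (simp add: add.commute)
  also have "\<dots> = trace (M ** kalman_prior A Q P ** transpose M) + trace X"
    unfolding kalman_prior_def
    by (simp add: trace_add matrix_add_ldistrib matrix_add_rdistrib' matrix_mul_assoc matrix_transpose_mul)
  finally have e2: "ferr A P Q (Suc d) = trace (M ** kalman_prior A Q P ** transpose M) + trace X" .
  have "0 \<le> trace (M ** kalman_prior A Q P ** transpose M - M ** P ** transpose M)"
  proof (rule trace_nonneg, rule allI)
    fix x :: "real^'n"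
    have "x \<bullet> ((M ** kalman_prior A Q P ** transpose M - M ** P ** transpose M) *v x)
       = (transpose M *v x) \<bullet> (kalman_prior A Q P *v (transpose M *v x)) - (transpose M *v x) \<bullet> (P *v (transpose M *v x))"
      by (simp add: matrix_vector_mult_diff_rdistrib inner_diff_right quad_tr matrix_vector_mul_assoc[symmetric])
    thus "0 \<le> x \<bullet> ((M ** kalman_prior A Q P ** transpose M - M ** P ** transpose M) *v x)"
      using kalman_gap[OF assms, of "transpose M *v x"] by simp
  qed
  thus ?thesis using e1 e2 by (simp add: trace_sub)
qed

lemma ferr_mono:
  fixes A P Q :: "real^'n^'n" and C :: "real^'n^'m" and R :: "real^'m^'m"
  assumes P: "psd P" and Q: "psd Q" and R: "pd R" and fx: "kalman_update A C Q R P = P"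
  shows "d \<le> d' \<Longrightarrow> ferr A P Q d \<le> ferr A P Q d'"
  using ferr_mono_Suc[OF assms] by (rule lift_Suc_mono_le)



definition monoD :: "(nat \<times> nat \<Rightarrow> real) \<Rightarrow> bool" where
  "monoD W \<longleftrightarrow> (\<forall>\<tau> \<delta> \<delta>'. 1 \<le> \<tau> \<longrightarrow> 1 \<le> \<delta> \<longrightarrow> \<delta> \<le> \<delta>' \<longrightarrow> W (\<tau>, \<delta>) \<le> W (\<tau>, \<delta>'))"
definition monoT :: "(nat \<times> nat \<Rightarrow> real) \<Rightarrow> bool" where
  "monoT W \<longleftrightarrow> (\<forall>\<tau> \<tau>' \<delta>. 1 \<le> \<tau> \<longrightarrow> \<tau> \<le> \<tau>' \<longrightarrow> 1 \<le> \<delta> \<longrightarrow> W (\<tau>, \<delta>) \<le> W (\<tau>', \<delta>))"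

lemma Q0: "Qfun f \<theta> tD dR W (\<tau>, \<delta>) 0 = f \<delta> + W (\<tau>+1, \<delta>+1)"
  by (simp add: Qfun_def cost_def succs_def trans_def)

lemma Q1: "1 \<le> \<delta> \<Longrightarrow> Qfun f \<theta> tD dR W (\<tau>, \<delta>) 1 = f \<delta> + \<theta> \<tau> * W (\<tau>+tD, 1) + (1 - \<theta> \<tau>) * W (\<tau>+tD, \<delta>+1)"
  by (simp add: Qfun_def cost_def succs_def trans_def)

lemma Q2: "Qfun f \<theta> tD dR W (\<tau>, \<delta>) 2 = (\<Sum>r<dR. f (\<delta> + r)) + W (1, \<delta>+dR)"
  by (simp add: Qfun_def cost_def succs_def trans_def)

lemma Min3: "Min (g ` {0::nat, 1, 2}) = min (g 0) (min (g 1) (g (2::nat))) "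
  by simp

lemma min3_mono: "(a::real) \<le> a' \<Longrightarrow> b \<le> b' \<Longrightarrow> c \<le> c' \<Longrightarrow> min a (min b c) \<le> min a' (min b' c')"
  by (auto simp: min_def)

lemma step_mono:
  fixes tD dR :: nat
  assumes fmono: "\<And>d d'. d \<le> d' \<Longrightarrow> f d \<le> f d'"
    and th01: "\<And>\<tau>. 1 \<le> \<tau> \<Longrightarrow> 0 \<le> \<theta> \<tau> \<and> \<theta> \<tau> \<le> 1"
    and thmono: "\<And>\<tau> \<tau>'. 1 \<le> \<tau> \<Longrightarrow> \<tau> \<le> \<tau>' \<Longrightarrow> \<theta> \<tau>' \<le> \<theta> \<tau>"
    and D: "monoD W" and T: "monoT W"
  defines "Vt \<equiv> (\<lambda>s. Min ((Qfun f \<theta> tD dR W s) ` {0, 1, 2}))"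
  shows "monoD Vt \<and> monoT Vt"
proof
  show "monoD Vt" unfolding monoD_def
  proof (intro allI impI)
    fix \<tau> \<delta> \<delta>' :: nat assume h: "1 \<le> \<tau>" "1 \<le> \<delta>" "\<delta> \<le> \<delta>'"
    have W: "\<And>t a b. 1 \<le> t \<Longrightarrow> 1 \<le> a \<Longrightarrow> a \<le> b \<Longrightarrow> W (t, a) \<le> W (t, b)" using D unfolding monoD_def by blast
    have a: "Qfun f \<theta> tD dR W (\<tau>, \<delta>) 0 \<le> Qfun f \<theta> tD dR W (\<tau>, \<delta>') 0"
      unfolding Q0 using h by (intro add_mono fmono W) auto
    have th: "0 \<le> \<theta> \<tau>" "\<theta> \<tau> \<le> 1" using th01 h by auto
    have "(1 - \<theta> \<tau>) * W (\<tau>+tD, \<delta>+1) \<le> (1 - \<theta> \<tau>) * W (\<tau>+tD, \<delta>'+1)"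
      using th h by (intro mult_left_mono W) auto
    hence b: "Qfun f \<theta> tD dR W (\<tau>, \<delta>) 1 \<le> Qfun f \<theta> tD dR W (\<tau>, \<delta>') 1"
      unfolding Q1[OF h(2)] Q1[OF order_trans[OF h(2,3)]] using h fmono[OF h(3)] by auto
    have c: "Qfun f \<theta> tD dR W (\<tau>, \<delta>) 2 \<le> Qfun f \<theta> tD dR W (\<tau>, \<delta>') 2"
      unfolding Q2 using h by (intro add_mono sum_mono fmono W) auto
    show "Vt (\<tau>, \<delta>) \<le> Vt (\<tau>, \<delta>')" unfolding Vt_def Min3 using a b c by (rule min3_mono)
  qed
  show "monoT Vt" unfolding monoT_def
  proof (intro allI impI)
    fix \<tau> \<tau>' \<delta> :: nat assume h: "1 \<le> \<tau>" "\<tau> \<le> \<tau>'" "1 \<le> \<delta>"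
    have W: "\<And>t t' a. 1 \<le> t \<Longrightarrow> t \<le> t' \<Longrightarrow> 1 \<le> a \<Longrightarrow> W (t, a) \<le> W (t', a)" using T unfolding monoT_def by blast
    have WD: "\<And>t a b. 1 \<le> t \<Longrightarrow> 1 \<le> a \<Longrightarrow> a \<le> b \<Longrightarrow> W (t, a) \<le> W (t, b)" using D unfolding monoD_def by blast
    have a: "Qfun f \<theta> tD dR W (\<tau>, \<delta>) 0 \<le> Qfun f \<theta> tD dR W (\<tau>', \<delta>) 0"
      unfolding Q0 using h by (intro add_mono W) auto
    define th where "th = \<theta> \<tau>"
    define th' where "th' = \<theta> \<tau>'"
    have th: "0 \<le> th" "th \<le> 1" "th' \<le> th" using th01 h thmono unfolding th_def th'_def by auto
    define x where "x = W (\<tau>+tD, 1)"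
    define y where "y = W (\<tau>+tD, \<delta>+1)"
    define x' where "x' = W (\<tau>'+tD, 1)"
    define y' where "y' = W (\<tau>'+tD, \<delta>+1)"
    have xx: "x \<le> x'" "y \<le> y'" "x' \<le> y'" unfolding x_def y_def x'_def y'_def using h
      by (auto intro!: W WD)
    have "th * x \<le> th * x'" using th xx by (intro mult_left_mono) auto
    moreover have "(1 - th) * y \<le> (1 - th) * y'" using th xx by (intro mult_left_mono) auto
    moreover have "(th - th') * (x' - y') \<le> 0" using th xx by (intro mult_nonneg_nonpos) auto
    ultimately have "th * x + (1 - th) * y \<le> th' * x' + (1 - th') * y'"
      by (simp add: algebra_simps)
    hence b: "Qfun f \<theta> tD dR W (\<tau>, \<delta>) 1 \<le> Qfun f \<theta> tD dR W (\<tau>', \<delta>) 1"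
      unfolding Q1[OF h(3)] th_def th'_def x_def y_def x'_def y'_def by simp
    have c: "Qfun f \<theta> tD dR W (\<tau>, \<delta>) 2 \<le> Qfun f \<theta> tD dR W (\<tau>', \<delta>) 2"
      unfolding Q2 by simp
    show "Vt (\<tau>, \<delta>) \<le> Vt (\<tau>', \<delta>)" unfolding Vt_def Min3 using a b c by (rule min3_mono)
  qed
qed

lemma rvi_mono:
  assumes fmono: "\<And>d d'. d \<le> d' \<Longrightarrow> f d \<le> f d'"
    and th01: "\<And>\<tau>. 1 \<le> \<tau> \<Longrightarrow> 0 \<le> \<theta> \<tau> \<and> \<theta> \<tau> \<le> 1"
    and thmono: "\<And>\<tau> \<tau>'. 1 \<le> \<tau> \<Longrightarrow> \<tau> \<le> \<tau>' \<Longrightarrow> \<theta> \<tau>' \<le> \<theta> \<tau>"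
    and D: "monoD V0" and T: "monoT V0"
  shows "monoD (rvi f \<theta> tD dR sref V0 n) \<and> monoT (rvi f \<theta> tD dR sref V0 n)"
proof (induction n)
  case 0 then show ?case using D T by simp
next
  case (Suc n)
  define W where "W = rvi f \<theta> tD dR sref V0 n"
  define Vt where "Vt = (\<lambda>s. Min ((Qfun f \<theta> tD dR W s) ` {0, 1, 2}))"
  have DW: "monoD W" "monoT W" using Suc W_def by auto
  have "monoD Vt \<and> monoT Vt" unfolding Vt_def
    by (rule step_mono[where f=f and \<theta>=\<theta>, OF fmono th01 thmono DW])
  moreover have "rvi f \<theta> tD dR sref V0 (Suc n) = (\<lambda>s. Vt s - Vt sref)"
    by (simp add: Vt_def W_def Let_def)
  ultimately show ?case by (simp add: monoD_def monoT_def)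
qed



theorem proposition1:
  fixes A :: "real^'n^'n" and C :: "real^'n^'m"
    and Q Qh Pbar :: "real^'n^'n" and R :: "real^'m^'m"
    and \<theta> :: "nat \<Rightarrow> real" and \<theta>min \<theta>max :: real
    and tD dR :: nat and sref :: "nat \<times> nat"
    and V0 V :: "nat \<times> nat \<Rightarrow> real"
  assumes Q_psd: "psd Q" and R_pd: "pd R"
    and Qh: "psd Qh" "Qh ** Qh = Q"
    and obs: "observable A C" and ctrb: "controllable A Qh"
    and Pbar: "steady_state_posterior A C Q R Pbar"
    and theta_bounds: "0 \<le> \<theta>min" "\<theta>min \<le> \<theta>max" "\<theta>max \<le> 1"
    and theta_range: "\<And>\<tau>. 1 \<le> \<tau> \<Longrightarrow> \<theta>min \<le> \<theta> \<tau> \<and> \<theta> \<tau> \<le> \<theta>max"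
    and theta_mono: "\<And>\<tau> \<tau>'. 1 \<le> \<tau> \<Longrightarrow> \<tau> \<le> \<tau>' \<Longrightarrow> \<theta> \<tau>' \<le> \<theta> \<tau>"
    and tD: "1 < tD" and dR: "1 < dR"
    and rho: "(spectral_radius A)\<^sup>2 * (1 - \<theta>max) < 1"
    and sref: "1 \<le> fst sref" "1 \<le> snd sref"
    and V0_mono_delta: "\<And>\<tau> \<delta> \<delta>'. 1 \<le> \<tau> \<Longrightarrow> 1 \<le> \<delta> \<Longrightarrow> \<delta> \<le> \<delta>' \<Longrightarrow> V0 (\<tau>, \<delta>) \<le> V0 (\<tau>, \<delta>')"
    and V0_mono_tau: "\<And>\<tau> \<tau>' \<delta>. 1 \<le> \<tau> \<Longrightarrow> \<tau> \<le> \<tau>' \<Longrightarrow> 1 \<le> \<delta> \<Longrightarrow> V0 (\<tau>, \<delta>) \<le> V0 (\<tau>', \<delta>)"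
    and V_lim: "\<And>\<tau> \<delta>. 1 \<le> \<tau> \<Longrightarrow> 1 \<le> \<delta> \<Longrightarrow>
        (\<lambda>n. rvi (ferr A Pbar Q) \<theta> tD dR sref V0 n (\<tau>, \<delta>)) \<longlonglongrightarrow> V (\<tau>, \<delta>)"
  shows "(\<forall>\<tau> \<delta> \<delta>'. 1 \<le> \<tau> \<longrightarrow> 1 \<le> \<delta> \<longrightarrow> \<delta> \<le> \<delta>' \<longrightarrow> V (\<tau>, \<delta>) \<le> V (\<tau>, \<delta>'))
       \<and> (\<forall>\<delta> \<tau> \<tau>'. 1 \<le> \<delta> \<longrightarrow> 1 \<le> \<tau> \<longrightarrow> \<tau> \<le> \<tau>' \<longrightarrow> V (\<tau>, \<delta>) \<le> V (\<tau>', \<delta>))"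
proof -
  let ?f = "ferr A Pbar Q"
  have Pb: "psd Pbar" "kalman_update A C Q R Pbar = Pbar" using Pbar by (auto simp: steady_state_posterior_def)
  have fmono: "\<And>d d'. d \<le> d' \<Longrightarrow> ?f d \<le> ?f d'"
    using ferr_mono[OF Pb(1) Q_psd R_pd Pb(2)] by blast
  have th01: "\<And>\<tau>. 1 \<le> \<tau> \<Longrightarrow> 0 \<le> \<theta> \<tau> \<and> \<theta> \<tau> \<le> 1"
    using theta_range theta_bounds by force
  have D0: "monoD V0" unfolding monoD_def using V0_mono_delta by blast
  have T0: "monoT V0" unfolding monoT_def using V0_mono_tau by blast
  have M: "\<And>n. monoD (rvi ?f \<theta> tD dR sref V0 n) \<and> monoT (rvi ?f \<theta> tD dR sref V0 n)"
    by (rule rvi_mono[where f="?f" and \<theta>=\<theta>, OF fmono th01 theta_mono D0 T0])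
  show ?thesis
  proof (intro conjI allI impI)
    fix \<tau> \<delta> \<delta>' :: nat assume h: "1 \<le> \<tau>" "1 \<le> \<delta>" "\<delta> \<le> \<delta>'"
    show "V (\<tau>, \<delta>) \<le> V (\<tau>, \<delta>')"
    proof (rule LIMSEQ_le[OF V_lim V_lim])
      show "\<exists>N. \<forall>n\<ge>N. rvi ?f \<theta> tD dR sref V0 n (\<tau>, \<delta>) \<le> rvi ?f \<theta> tD dR sref V0 n (\<tau>, \<delta>')"
        using M h unfolding monoD_def by blast
    qed (use h in auto)
  next
    fix \<delta> \<tau> \<tau>' :: nat assume h: "1 \<le> \<delta>" "1 \<le> \<tau>" "\<tau> \<le> \<tau>'"
    show "V (\<tau>, \<delta>) \<le> V (\<tau>', \<delta>)"
    proof (rule LIMSEQ_le[OF V_lim V_lim])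
      show "\<exists>N. \<forall>n\<ge>N. rvi ?f \<theta> tD dR sref V0 n (\<tau>, \<delta>) \<le> rvi ?f \<theta> tD dR sref V0 n (\<tau>', \<delta>)"
        using M h unfolding monoT_def by blast
    qed (use h in auto)
  qed
qed

end
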